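(* Let $\sigma,\eta>0$ and $\mathscr{C}$ be a family of balls as in the context. Let $B_0\in\mathscr{C}$ with $0\in B_0$, let $R>0$ be such that $B_0^{(7)}\subset B(0,R)$, and let $\mathscr{C}_R:=\{B\in\mathscr{C}: B\cap B(0,R)\neq\emptyset\}$. Then there is a constant $C$ depending only on $\eta$ such that for every $B\in\mathscr{C}_R$, \[ |x_B|\le CR\quad\text{and}\quad r_B\le CR. \]
   Context: Cover: for constants $\sigma,\eta>0$, $\mathscr{C}$ is a family of closed balls in $\mathbb{R}^3$ with $\bigcup_{B\in\mathscr{C}}B=\mathbb{R}^3$ and $|B|\geq 4\pi/3$ for all $B\in\mathscr{C}$, such that (i) each ball in $\mathscr{C}$ intersects at most $\sigma$ balls in $\mathscr{C}$, and (ii) if $B,B'\in\mathscr{C}$ intersect then $\eta^{-1}\le |B|^{1/3}/|B'|^{1/3}\le\eta$. $x_B$ and $r_B$ denote the center and radius of $B$. Layers: for $B\in\mathscr{C}$ set $B^{(0)}:=B$, $P^{(0)}:=\{B\}$, and for $n\ge1$, $P^{(n)}:=\{B'\in\mathscr{C}: B'\cap B^{(n-1)}\neq\emptyset\}$, $B^{(n)}:=\bigcup_{B'\in P^{(n)}}B'$. *)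

theory Defs
  imports "HOL-Analysis.Analysis"
begin

type_synonym ball3 = "(real^3) \<times> real"

definition bset :: "ball3 \<Rightarrow> (real^3) set" where
  "bset B = cball (fst B) (snd B)"

definition vol :: "ball3 \<Rightarrow> real" where
  "vol B = measure lebesgue (bset B)"

definition is_cover :: "real \<Rightarrow> real \<Rightarrow> ball3 set \<Rightarrow> bool" where
  "is_cover \<sigma> \<eta> \<C> \<longleftrightarrow>
     \<sigma> > 0 \<and> \<eta> > 0 \<and>
     (\<forall>B\<in>\<C>. snd B > 0) \<and>
     (\<Union>B\<in>\<C>. bset B) = UNIV \<and>
     (\<forall>B\<in>\<C>. vol B \<ge> 4 * pi / 3) \<and>
     (\<forall>B\<in>\<C>. finite {B'\<in>\<C>. bset B' \<inter> bset B \<noteq> {}} \<and>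
               real (card {B'\<in>\<C>. bset B' \<inter> bset B \<noteq> {}}) \<le> \<sigma>) \<and>
     (\<forall>B\<in>\<C>. \<forall>B'\<in>\<C>. bset B \<inter> bset B' \<noteq> {} \<longrightarrow>
         inverse \<eta> \<le> vol B powr (1/3) / vol B' powr (1/3) \<and>
         vol B powr (1/3) / vol B' powr (1/3) \<le> \<eta>)"

fun layer :: "ball3 set \<Rightarrow> ball3 \<Rightarrow> nat \<Rightarrow> (real^3) set" where
  "layer \<C> B 0 = bset B"
| "layer \<C> B (Suc n) = (\<Union>B'\<in>{B'\<in>\<C>. bset B' \<inter> layer \<C> B n \<noteq> {}}. bset B')"

end

theory Submission
  imports Defs
begin

lemma vol_eq: assumes "snd B \<ge> 0" shows "vol B = 4/3*pi * snd B ^ 3"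
proof -
  have "vol B = measure lborel (cball (fst B) (snd B))"
    unfolding vol_def bset_def by (rule measure_completion) simp
  also have "\<dots> = unit_ball_vol 3 * snd B ^ 3"
    using content_cball[OF assms, of "fst B"] by simp
  finally show ?thesis by (simp add: unit_ball_vol_3)
qed

lemma vol_root: assumes "snd B > 0" shows "vol B powr (1/3) = (4/3*pi) powr (1/3) * snd B"
proof -
  have "vol B powr (1/3) = (4/3*pi) powr (1/3) * (snd B ^ 3) powr (1/3)"
    using assms unfolding vol_eq[OF less_imp_le[OF assms]]
    by (intro powr_mult)
  also have "(snd B ^ 3) powr (1/3) = snd B"
  proof -
    have "snd B ^ 3 = snd B powr (real 3)" using powr_realpow[of "snd B" 3] assms by simp
    hence "(snd B ^ 3) powr (1/3) = snd B powr (real 3 * (1/3))" by (simp only: powr_powr)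
    also have "real 3 * (1/3) = (1::real)" by simp
    finally show ?thesis using assms by simp
  qed
  finally show ?thesis .
qed

lemma ratio: assumes "snd B > 0" "snd B' > 0"
  shows "vol B powr (1/3) / vol B' powr (1/3) = snd B / snd B'"
proof -
  have "(4/3*pi) powr (1/3) > (0::real)" by simp
  then show ?thesis unfolding vol_root[OF assms(1)] vol_root[OF assms(2)] by simp
qed

lemma rad_ge1: assumes "snd B > 0" "vol B \<ge> 4*pi/3" shows "snd B \<ge> 1"
proof (rule ccontr)
  assume "\<not> snd B \<ge> 1"
  hence "snd B ^ 3 < 1 ^ 3" using assms(1) by (intro power_strict_mono) auto
  hence "4/3*pi * snd B ^ 3 < 4/3*pi * 1" by (intro mult_strict_left_mono) auto
  moreover have "vol B = 4/3*pi * snd B ^ 3" using assms(1) vol_eq[of B] by simp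
  ultimately show False using assms(2) by simp
qed

lemma cov_D1: "is_cover \<sigma> \<eta> C \<Longrightarrow> \<forall>B\<in>C. snd B > 0"
  unfolding is_cover_def by (elim conjE) assumption
lemma cov_D2: "is_cover \<sigma> \<eta> C \<Longrightarrow> (\<Union>B\<in>C. bset B) = UNIV"
  unfolding is_cover_def by (elim conjE) assumption
lemma cov_D3: "is_cover \<sigma> \<eta> C \<Longrightarrow> \<forall>B\<in>C. vol B \<ge> 4 * pi / 3"
  unfolding is_cover_def by (elim conjE) assumption
lemma cov_D4: "is_cover \<sigma> \<eta> C \<Longrightarrow> \<forall>B\<in>C. finite {B'\<in>C. bset B' \<inter> bset B \<noteq> {}} \<and>
               real (card {B'\<in>C. bset B' \<inter> bset B \<noteq> {}}) \<le> \<sigma>"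
  unfolding is_cover_def by (elim conjE) assumption
lemma cov_D5: "is_cover \<sigma> \<eta> C \<Longrightarrow> \<forall>B\<in>C. \<forall>B'\<in>C. bset B \<inter> bset B' \<noteq> {} \<longrightarrow>
         inverse \<eta> \<le> vol B powr (1/3) / vol B' powr (1/3) \<and>
         vol B powr (1/3) / vol B' powr (1/3) \<le> \<eta>"
  unfolding is_cover_def by (elim conjE) assumption

lemma cov_pos: "is_cover \<sigma> \<eta> C \<Longrightarrow> D \<in> C \<Longrightarrow> snd D > 0"
  using cov_D1 by blast
lemma cov_union: assumes "is_cover \<sigma> \<eta> C" shows "\<exists>D\<in>C. y \<in> bset D"
proof -
  have "y \<in> (\<Union>B\<in>C. bset B)" using cov_D2[OF assms] by simp
  then show ?thesis by (rule UN_E) blast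
qed
lemma cov_r1: assumes "is_cover \<sigma> \<eta> C" "D \<in> C" shows "snd D \<ge> 1"
  by (rule rad_ge1) (use cov_D1[OF assms(1)] cov_D3[OF assms(1)] assms(2) in auto)
lemma cov_fin: assumes "is_cover \<sigma> \<eta> C" "D \<in> C" shows "finite {B'\<in>C. bset B' \<inter> bset D \<noteq> {}}"
  using cov_D4[OF assms(1)] assms(2) by blast
lemma cov_ratio: assumes "is_cover \<sigma> \<eta> C" "D \<in> C" "D' \<in> C" "bset D \<inter> bset D' \<noteq> {}"
  shows "snd D \<le> \<eta> * snd D'"
proof -
  have "vol D powr (1/3) / vol D' powr (1/3) \<le> \<eta>" using cov_D5[OF assms(1)] assms(2,3,4) by blast
  hence "snd D / snd D' \<le> \<eta>" using ratio[of D D'] cov_pos[OF assms(1)] assms(2,3) by simp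
  thus ?thesis using cov_pos[OF assms(1) assms(3)] by (simp add: divide_le_eq)
qed
lemma cov_eta: assumes "is_cover \<sigma> \<eta> C" "D \<in> C" shows "\<eta> \<ge> 1"
proof -
  have "fst D \<in> bset D" using cov_pos[OF assms] unfolding bset_def by simp
  then have "bset D \<inter> bset D \<noteq> {}" by blast
  then have "snd D \<le> \<eta> * snd D" using cov_ratio[OF assms assms(2)] by simp
  thus ?thesis using cov_pos[OF assms] by simp
qed

lemma loc_fin:
  assumes cov: "is_cover \<sigma> \<eta> C"
  shows "\<exists>e>0. \<forall>D\<in>C. bset D \<inter> ball x e \<noteq> {} \<longrightarrow> x \<in> bset D"
proof -
  define F where "F = {D\<in>C. bset D \<inter> cball x 1 \<noteq> {}}"
  have fin: "finite F"
  proof (rule ccontr)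
    assume inf: "infinite F"
    have "\<forall>D\<in>F. \<exists>z. cball z 1 \<subseteq> bset D \<and> dist x z \<le> 2"
    proof
      fix D assume "D\<in>F"
      then obtain y where y: "y \<in> bset D" "dist x y \<le> 1" and DC: "D\<in>C" by (auto simp: F_def)
      define r where "r = snd D"
      define c where "c = fst D"
      have r1: "r \<ge> 1" using cov_r1[OF cov DC] r_def by simp
      have yc: "dist c y \<le> r" using y(1) by (simp add: bset_def r_def c_def)
      define z where "z = y + (1/r) *\<^sub>R (c - y)"
      have cz: "c - z = (1 - 1/r) *\<^sub>R (c - y)" by (simp add: z_def algebra_simps)
      have dcz: "dist c z = (1 - 1/r) * dist c y"
        using r1 by (simp add: dist_norm cz)
      have dyz: "dist y z = (1/r) * dist c y"
        using r1 by (simp add: dist_norm z_def dist_commute norm_minus_commute)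
      have "cball z 1 \<subseteq> bset D"
      proof
        fix w assume "w \<in> cball z 1"
        hence w: "dist z w \<le> 1" by simp
        have "dist c w \<le> dist c z + dist z w" by (rule dist_triangle)
        also have "\<dots> \<le> (1 - 1/r) * r + 1"
          using w yc r1 dcz by (intro add_mono) (auto intro: mult_left_mono)
        also have "\<dots> = r" using r1 by (simp add: algebra_simps)
        finally show "w \<in> bset D" by (simp add: bset_def c_def r_def)
      qed
      moreover have "dist x z \<le> 2"
      proof -
        have "dist x z \<le> dist x y + dist y z" by (rule dist_triangle)
        also have "dist y z \<le> 1" using dyz yc r1 by (simp add: divide_le_eq)
        finally show ?thesis using y(2) by simp
      qed
      ultimately show "\<exists>z. cball z 1 \<subseteq> bset D \<and> dist x z \<le> 2" by blast
    qed
    from bchoice[OF this] obtain zf where zf: "\<forall>D\<in>F. cball (zf D) 1 \<subseteq> bset D \<and> dist x (zf D) \<le> 2"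
      by (elim exE)
    have cov2: "cball x 2 \<subseteq> (\<Union>t\<in>cball x 2. ball t (1/2))" by auto
    obtain T where T: "T \<subseteq> cball x 2" "finite T" "cball x 2 \<subseteq> (\<Union>t\<in>T. ball t (1/2))"
      by (rule compactE_image[OF compact_cball _ cov2]) simp_all
    have Feq: "F = (\<Union>t\<in>T. {D\<in>F. zf D \<in> ball t (1/2)})"
    proof
      show "F \<subseteq> (\<Union>t\<in>T. {D\<in>F. zf D \<in> ball t (1/2)})"
      proof
        fix D assume "D \<in> F"
        then have "zf D \<in> cball x 2" using zf by auto
        then show "D \<in> (\<Union>t\<in>T. {D\<in>F. zf D \<in> ball t (1/2)})" using T(3) \<open>D\<in>F\<close> by blast
      qed
    qed auto
    have "\<exists>t\<in>T. infinite {D\<in>F. zf D \<in> ball t (1/2)}"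
    proof (rule ccontr)
      assume "\<not> (\<exists>t\<in>T. infinite {D\<in>F. zf D \<in> ball t (1/2)})"
      hence "finite (\<Union>t\<in>T. {D\<in>F. zf D \<in> ball t (1/2)})" using T(2) by blast
      thus False using Feq inf by simp
    qed
    then obtain t where t: "t\<in>T" "infinite {D\<in>F. zf D \<in> ball t (1/2)}" by blast
    define G where "G = {D\<in>F. zf D \<in> ball t (1/2)}"
    obtain D0 where D0: "D0 \<in> G" using t(2) G_def by (metis finite.emptyI equals0I)
    have D0C: "D0 \<in> C" using D0 by (simp add: G_def F_def)
    have "G \<subseteq> {B'\<in>C. bset B' \<inter> bset D0 \<noteq> {}}"
    proof
      fix D assume D: "D \<in> G"
      have h1: "dist t (zf D) < 1/2" "dist t (zf D0) < 1/2" using D D0 by (auto simp: G_def)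
      have "dist (zf D) (zf D0) \<le> dist (zf D) t + dist t (zf D0)" by (rule dist_triangle)
      hence "dist (zf D) (zf D0) < 1" using h1 by (simp add: dist_commute)
      define m where "m = midpoint (zf D) (zf D0)"
      have "m \<in> cball (zf D) 1" "m \<in> cball (zf D0) 1"
        using \<open>dist (zf D) (zf D0) < 1\<close> by (auto simp: m_def dist_midpoint)
      hence "m \<in> bset D" "m \<in> bset D0" using zf D D0 unfolding G_def by blast+
      thus "D \<in> {B'\<in>C. bset B' \<inter> bset D0 \<noteq> {}}" using D by (auto simp: G_def F_def)
    qed
    hence "finite G" using cov_fin[OF cov D0C] finite_subset by blast
    thus False using t(2) G_def by simp
  qed
  define G where "G = \<Union>(bset ` {D\<in>F. x \<notin> bset D})"
  have "closed G" unfolding G_def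
    by (rule closed_Union) (use fin in \<open>auto simp: bset_def\<close>)
  moreover have "x \<notin> G" by (auto simp: G_def)
  ultimately obtain e where e: "e > 0" "ball x e \<subseteq> - G"
    using open_contains_ball[of "- G"] by (auto simp: open_Compl)
  show ?thesis
  proof (intro exI[of _ "min e 1"] conjI ballI impI)
    show "min e 1 > 0" using e by simp
    fix D assume D: "D \<in> C" "bset D \<inter> ball x (min e 1) \<noteq> {}"
    then obtain w where w0: "w \<in> bset D" "w \<in> ball x (min e 1)" by blast
    hence w: "w \<in> bset D" "dist x w < min e 1" by auto
    then have "D \<in> F" using D by (auto simp: F_def)
    show "x \<in> bset D"
    proof (rule ccontr)
      assume "x \<notin> bset D"
      then have "D \<in> {D\<in>F. x \<notin> bset D}" using \<open>D\<in>F\<close> by blast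
      then have "bset D \<subseteq> G" unfolding G_def by (rule Union_upper[OF imageI])
      then have "w \<in> G" using w by blast
      moreover have "w \<in> ball x e" using w by simp
      ultimately show False using e by auto
    qed
  qed
qed

lemma layer_Suc_iff: "z \<in> layer C B (Suc n) \<longleftrightarrow> (\<exists>D\<in>C. bset D \<inter> layer C B n \<noteq> {} \<and> z \<in> bset D)"
  by (simp only: layer.simps) blast

lemma layer_cover: "B \<in> C \<Longrightarrow> z \<in> layer C B n \<Longrightarrow> \<exists>D\<in>C. z \<in> bset D \<and> bset D \<subseteq> layer C B n"
proof (induction n arbitrary: z)
  case 0
  then show ?case by auto
next
  case (Suc n)
  then obtain D where D: "D \<in> C" "bset D \<inter> layer C B n \<noteq> {}" "z \<in> bset D"
    using layer_Suc_iff by blast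
  have "bset D \<subseteq> layer C B (Suc n)" using D layer_Suc_iff by blast
  then show ?case using D by blast
qed

lemma layer_Suc_subset: "D \<in> C \<Longrightarrow> bset D \<inter> layer C B n \<noteq> {} \<Longrightarrow> bset D \<subseteq> layer C B (Suc n)"
  using layer_Suc_iff by blast

lemma layer_mono_Suc: assumes "B \<in> C" shows "layer C B n \<subseteq> layer C B (Suc n)"
proof
  fix z assume "z \<in> layer C B n"
  then obtain D where D: "D\<in>C" "z \<in> bset D" "bset D \<subseteq> layer C B n" using layer_cover[OF assms] by blast
  then have "bset D \<inter> layer C B n \<noteq> {}" by blast
  then show "z \<in> layer C B (Suc n)" using D layer_Suc_iff by blast
qed

lemma layer_mono: assumes "B \<in> C" "m \<le> n" shows "layer C B m \<subseteq> layer C B n"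
  using lift_Suc_mono_le[of "layer C B", OF layer_mono_Suc[OF assms(1)] assms(2)] .

lemma layer_closed: assumes cov: "is_cover \<sigma> \<eta> C" and BC: "B \<in> C" shows "closed (layer C B n)"
proof -
  have "open (- layer C B n)"
    unfolding open_contains_ball
  proof
    fix y assume y: "y \<in> - layer C B n"
    obtain e where e: "e > 0" "\<forall>D\<in>C. bset D \<inter> ball y e \<noteq> {} \<longrightarrow> y \<in> bset D"
      using loc_fin[OF cov] by blast
    have "ball y e \<subseteq> - layer C B n"
    proof
      fix z assume z: "z \<in> ball y e"
      show "z \<in> - layer C B n"
      proof
        assume "z \<in> layer C B n"
        then obtain D where D: "D\<in>C" "z \<in> bset D" "bset D \<subseteq> layer C B n"
          using layer_cover[OF BC] by blast
        then have "bset D \<inter> ball y e \<noteq> {}" using z by blast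
        then have "y \<in> bset D" using e D by blast
        then show False using y D by blast
      qed
    qed
    then show "\<exists>e>0. ball y e \<subseteq> - layer C B n" using e by blast
  qed
  then show ?thesis by (simp add: closed_def)
qed

lemma layer_interior: assumes cov: "is_cover \<sigma> \<eta> C" and BC: "B \<in> C"
  shows "layer C B n \<subseteq> interior (layer C B (Suc n))"
proof
  fix x assume x: "x \<in> layer C B n"
  obtain e where e: "e > 0" "\<forall>D\<in>C. bset D \<inter> ball x e \<noteq> {} \<longrightarrow> x \<in> bset D"
    using loc_fin[OF cov] by blast
  have "ball x e \<subseteq> layer C B (Suc n)"
  proof
    fix y assume y: "y \<in> ball x e"
    obtain D where D: "D \<in> C" "y \<in> bset D" using cov_union[OF cov] by blast
    then have "bset D \<inter> ball x e \<noteq> {}" using y by blast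
    then have "x \<in> bset D" using e D by blast
    then have "bset D \<inter> layer C B n \<noteq> {}" using x by blast
    then show "y \<in> layer C B (Suc n)" using D layer_Suc_iff by blast
  qed
  then show "x \<in> interior (layer C B (Suc n))" unfolding mem_interior using e by blast
qed

lemma layer_rad: assumes cov: "is_cover \<sigma> \<eta> C" and BC: "B \<in> C"
  shows "z \<in> layer C B n \<Longrightarrow> \<exists>D\<in>C. z \<in> bset D \<and> snd D \<ge> snd B / \<eta> ^ n"
proof (induction n arbitrary: z)
  case 0
  then show ?case using BC by auto
next
  case (Suc n)
  then obtain D where D: "D \<in> C" "bset D \<inter> layer C B n \<noteq> {}" "z \<in> bset D"
    using layer_Suc_iff by blast
  then obtain w where w: "w \<in> bset D" "w \<in> layer C B n" by blast
  then obtain D' where D': "D' \<in> C" "w \<in> bset D'" "snd D' \<ge> snd B / \<eta> ^ n" using Suc.IH by blast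
  have "bset D' \<inter> bset D \<noteq> {}" using w D' by blast
  then have le: "snd D' \<le> \<eta> * snd D" using cov_ratio[OF cov D'(1) D(1)] by blast
  have eta: "\<eta> \<ge> 1" using cov_eta[OF cov BC] .
  have "snd B / \<eta> ^ Suc n = (snd B / \<eta> ^ n) / \<eta>" by simp
  also have "\<dots> \<le> snd D' / \<eta>" by (rule divide_right_mono[OF D'(3)]) (use eta in simp)
  also have "\<dots> \<le> snd D" using le eta by (simp add: divide_le_eq mult.commute)
  finally show ?case using D by blast
qed

lemma meet_rad: assumes cov: "is_cover \<sigma> \<eta> C" and BC: "B \<in> C" and DC: "D \<in> C"
  and m: "bset D \<inter> layer C B n \<noteq> {}"
  shows "snd D \<ge> snd B / \<eta> ^ Suc n"
proof -
  obtain w where w: "w \<in> bset D" "w \<in> layer C B n" using m by blast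
  then obtain D' where D': "D' \<in> C" "w \<in> bset D'" "snd D' \<ge> snd B / \<eta> ^ n"
    using layer_rad[OF cov BC] by blast
  have "bset D' \<inter> bset D \<noteq> {}" using w D' by blast
  then have le: "snd D' \<le> \<eta> * snd D" using cov_ratio[OF cov D'(1) DC] by blast
  have eta: "\<eta> \<ge> 1" using cov_eta[OF cov BC] .
  have "snd B / \<eta> ^ Suc n = (snd B / \<eta> ^ n) / \<eta>" by simp
  also have "\<dots> \<le> snd D' / \<eta>" by (rule divide_right_mono[OF D'(3)]) (use eta in simp)
  also have "\<dots> \<le> snd D" using le eta by (simp add: divide_le_eq mult.commute)
  finally show ?thesis .
qed


lemma separation:
  assumes cov: "is_cover \<sigma> \<eta> C" and BC: "B \<in> C" and p: "p \<in> bset B"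
    and q: "q \<notin> layer C B (Suc k)"
  shows "\<exists>D\<in>C. bset D \<inter> closed_segment p q \<noteq> {} \<and> bset D \<inter> layer C B k \<noteq> {} \<and>
           (\<forall>m. k = Suc m \<longrightarrow> bset D \<inter> layer C B m = {})"
proof -
  let ?S = "closed_segment p q"
  let ?L = "layer C B (Suc k)"
  have "\<exists>x\<in>?S. x \<in> ?L \<and> x \<notin> layer C B k"
  proof (rule ccontr)
    assume "\<not> (\<exists>x\<in>?S. x \<in> ?L \<and> x \<notin> layer C B k)"
    then have sub: "?S \<subseteq> interior ?L \<union> - ?L" using layer_interior[OF cov BC, of k] by blast
    have dis: "interior ?L \<inter> - ?L \<inter> ?S = {}" using interior_subset by blast
    have "interior ?L \<inter> ?S = {} \<or> - ?L \<inter> ?S = {}"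
      by (rule connectedD[OF connected_segment open_interior open_Compl[OF layer_closed[OF cov BC]] dis sub])
    moreover have "p \<in> interior ?L"
    proof -
      have "p \<in> layer C B 0" using p by simp
      then have "p \<in> layer C B k" using layer_mono[OF BC, of 0 k] by blast
      then show ?thesis using layer_interior[OF cov BC, of k] by blast
    qed
    moreover have "q \<in> - ?L" by (rule ComplI) (use q in blast)
    moreover have "p \<in> ?S" "q \<in> ?S" by (rule ends_in_segment)+
    ultimately show False by blast
  qed
  then obtain x where x: "x \<in> ?S" "x \<in> ?L" "x \<notin> layer C B k" by blast
  then obtain D where D: "D \<in> C" "bset D \<inter> layer C B k \<noteq> {}" "x \<in> bset D"
    using layer_Suc_iff by blast
  have "\<forall>m. k = Suc m \<longrightarrow> bset D \<inter> layer C B m = {}"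
  proof (intro allI impI)
    fix m assume "k = Suc m"
    show "bset D \<inter> layer C B m = {}"
    proof (rule ccontr)
      assume "bset D \<inter> layer C B m \<noteq> {}"
      then have "x \<in> layer C B (Suc m)" using D layer_Suc_iff by blast
      then show False using x \<open>k = Suc m\<close> by simp
    qed
  qed
  then show ?thesis using D x by blast
qed

lemma shrink:
  fixes c :: "'a::euclidean_space"
  assumes "cball c r \<inter> ball 0 R \<noteq> {}" "0 < \<rho>" "\<rho> \<le> r"
  shows "\<exists>c'. cball c' \<rho> \<subseteq> cball c r \<and> norm c' < \<rho> + R"
proof -
  obtain y where y: "dist c y \<le> r" "norm y < R" using assms(1) by auto
  have r0: "r > 0" using assms by simp
  define z where "z = y + (\<rho>/r) *\<^sub>R (c - y)"
  have cz: "c - z = (1 - \<rho>/r) *\<^sub>R (c - y)" by (simp add: z_def algebra_simps)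
  have q0: "0 \<le> 1 - \<rho>/r" using assms r0 by (simp add: divide_le_eq)
  have dcz: "dist c z = (1 - \<rho>/r) * dist c y"
    using q0 by (simp add: dist_norm cz)
  have yz: "z - y = (\<rho>/r) *\<^sub>R (c - y)" by (simp add: z_def)
  have dyz: "norm (z - y) = (\<rho>/r) * dist c y"
    using assms r0 by (simp add: yz dist_norm)
  have "cball z \<rho> \<subseteq> cball c r"
  proof
    fix w assume "w \<in> cball z \<rho>"
    hence w: "dist z w \<le> \<rho>" by simp
    have "dist c w \<le> dist c z + dist z w" by (rule dist_triangle)
    also have "\<dots> \<le> (1 - \<rho>/r) * r + \<rho>"
      using w y q0 dcz by (intro add_mono) (auto intro: mult_left_mono)
    also have "\<dots> = r" using r0 by (simp add: algebra_simps)
    finally show "w \<in> cball c r" by simp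
  qed
  moreover have "norm z < \<rho> + R"
  proof -
    have "norm z \<le> norm y + norm (z - y)" by (metis add.commute diff_add_cancel norm_triangle_ineq)
    also have "norm (z - y) \<le> \<rho>"
    proof -
      have "(\<rho>/r) * dist c y \<le> (\<rho>/r) * r" using y assms r0 by (intro mult_left_mono) auto
      then show ?thesis using dyz r0 by simp
    qed
    finally show ?thesis using y by simp
  qed
  ultimately show ?thesis by blast
qed

lemma disj_dist:
  fixes a b :: "'a::euclidean_space"
  assumes "cball a \<rho> \<inter> cball b \<rho> = {}"
  shows "dist a b > 2 * \<rho>"
proof (rule ccontr)
  assume "\<not> dist a b > 2 * \<rho>"
  then have "midpoint a b \<in> cball a \<rho>" "midpoint a b \<in> cball b \<rho>"
    by (auto simp: dist_midpoint)
  then show False using assms by blast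
qed

lemma aux_lin: fixes a x1 x2 x3 y1 y2 y3 s w :: real
  shows "a < x1 \<Longrightarrow> a < x2 \<Longrightarrow> a < x3 \<Longrightarrow> y1 < s \<Longrightarrow> y2 < s \<Longrightarrow> y3 < s
  \<Longrightarrow> 0 \<le> w \<Longrightarrow> x1+x2+x3+w = 3*(y1+y2+y3) \<Longrightarrow> 3 * a < 9 * s"
  by argo

lemma three_pts:
  fixes a b c :: "'a::euclidean_space"
  assumes "norm a < s" "norm b < s" "norm c < s" "dist a b > 2*\<rho>" "dist b c > 2*\<rho>" "dist c a > 2*\<rho>"
    "\<rho> > 0"
  shows "12 * \<rho>^2 < 9 * s^2"
proof -
  have id: "(dist a b)^2 + (dist b c)^2 + (dist c a)^2 + (norm (a+b+c))^2 = 3*((norm a)^2 + (norm b)^2 + (norm c)^2)"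
    by (simp add: dist_norm power2_norm_eq_inner inner_diff_left inner_diff_right inner_add_left
        inner_add_right inner_commute algebra_simps)
  have "(2*\<rho>)^2 < (dist a b)^2" using assms by (intro power_strict_mono) auto
  moreover have "(2*\<rho>)^2 < (dist b c)^2" using assms by (intro power_strict_mono) auto
  moreover have "(2*\<rho>)^2 < (dist c a)^2" using assms by (intro power_strict_mono) auto
  moreover have "(norm a)^2 < s^2" using assms by (intro power_strict_mono) auto
  moreover have "(norm b)^2 < s^2" using assms by (intro power_strict_mono) auto
  moreover have "(norm c)^2 < s^2" using assms by (intro power_strict_mono) auto
  moreover have "(norm (a+b+c))^2 \<ge> 0" by simp
  ultimately have "3 * (2 * \<rho>)^2 < 9 * s^2" using id by (rule aux_lin)
  moreover have "(2*\<rho>)^2 = 4*\<rho>^2" by (simp add: power_mult_distrib)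
  ultimately show ?thesis by linarith
qed

lemma three_balls:
  fixes c1 c2 c3 :: "'a::euclidean_space"
  assumes d12: "cball c1 r1 \<inter> cball c2 r2 = {}" and d13: "cball c1 r1 \<inter> cball c3 r3 = {}"
    and d23: "cball c2 r2 \<inter> cball c3 r3 = {}"
    and r: "\<rho> \<le> r1" "\<rho> \<le> r2" "\<rho> \<le> r3" "0 < \<rho>" "0 < R"
    and m: "cball c1 r1 \<inter> ball 0 R \<noteq> {}" "cball c2 r2 \<inter> ball 0 R \<noteq> {}" "cball c3 r3 \<inter> ball 0 R \<noteq> {}"
  shows "\<rho> < 13 * R"
proof (rule ccontr)
  assume "\<not> \<rho> < 13 * R"
  then have big: "13 * R \<le> \<rho>" by simp
  obtain a where a: "cball a \<rho> \<subseteq> cball c1 r1" "norm a < \<rho> + R" using shrink[OF m(1) r(4) r(1)] by blast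
  obtain b where b: "cball b \<rho> \<subseteq> cball c2 r2" "norm b < \<rho> + R" using shrink[OF m(2) r(4) r(2)] by blast
  obtain c where c: "cball c \<rho> \<subseteq> cball c3 r3" "norm c < \<rho> + R" using shrink[OF m(3) r(4) r(3)] by blast
  have "dist a b > 2*\<rho>" by (rule disj_dist) (use a b d12 in blast)
  moreover have "dist b c > 2*\<rho>" by (rule disj_dist) (use b c d23 in blast)
  moreover have "dist c a > 2*\<rho>" by (rule disj_dist) (use a c d13 in blast)
  ultimately have "12 * \<rho>^2 < 9 * (\<rho> + R)^2" using three_pts[OF a(2) b(2) c(2)] r(4) by blast
  moreover have "(\<rho> + R)^2 \<le> (14/13 * \<rho>)^2" using big r by (intro power_mono) auto
  ultimately have "12 * \<rho>^2 < 9 * (14/13 * \<rho>)^2" by linarith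
  moreover have "(14/13 * \<rho>)^2 = (196/169) * \<rho>^2" by (simp add: power_mult_distrib power2_eq_square)
  moreover have "\<rho>^2 > 0" using r(4) by simp
  ultimately show False by linarith
qed


theorem proposition3p5:
  fixes \<eta> :: real
  assumes "\<eta> > 0"
  shows "\<exists>C::real. \<forall>(\<sigma>::real) (\<C>::ball3 set) (B0::ball3) (R::real).
           is_cover \<sigma> \<eta> \<C> \<longrightarrow> B0 \<in> \<C> \<longrightarrow> 0 \<in> bset B0 \<longrightarrow> R > 0 \<longrightarrow>
           layer \<C> B0 7 \<subseteq> ball 0 R \<longrightarrow>
           (\<forall>B\<in>{B\<in>\<C>. bset B \<inter> ball 0 R \<noteq> {}}.
              norm (fst B) \<le> C * R \<and> snd B \<le> C * R)"
proof (intro exI[of _ "13 * \<eta>^4 + 1"] allI impI ballI conjI)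
  fix \<sigma> :: real and C :: "ball3 set" and B0 :: ball3 and R :: real and B :: ball3
  assume cov: "is_cover \<sigma> \<eta> C" and B0C: "B0 \<in> C" and z0: "0 \<in> bset B0" and R: "R > 0"
    and L7: "layer C B0 7 \<subseteq> ball 0 R" and BB: "B \<in> {B\<in>C. bset B \<inter> ball 0 R \<noteq> {}}"
  have BC: "B \<in> C" using BB by simp
  obtain p where p: "p \<in> bset B" "p \<in> ball 0 R" using BB by blast
  have eta: "\<eta> \<ge> 1" using cov_eta[OF cov BC] .
  have etap: "\<eta> ^ 4 > 0" using eta by simp
  have rB0: "snd B > 0" using cov_pos[OF cov BC] .
  have rB: "snd B \<le> 13 * \<eta>^4 * R"
  proof (cases "0 \<in> layer C B 4")
    case True
    then obtain D where D: "D \<in> C" "0 \<in> bset D" "snd D \<ge> snd B / \<eta> ^ 4"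
      using layer_rad[OF cov BC] by blast
    have "bset D \<inter> layer C B0 0 \<noteq> {}" using D(2) z0 by auto
    then have "bset D \<subseteq> layer C B0 (Suc 0)" by (rule layer_Suc_subset[OF D(1)])
    also have "\<dots> \<subseteq> layer C B0 7" by (rule layer_mono[OF B0C]) simp
    finally have "cball (fst D) (snd D) \<subseteq> ball 0 R" using L7 by (simp add: bset_def)
    then have "snd D < R" using cov_pos[OF cov D(1)] unfolding cball_subset_ball_iff
      by (smt (verit) zero_le_dist)
    then have "snd B / \<eta> ^ 4 < R" using D(3) by simp
    then have "snd B < \<eta>^4 * R" using etap by (simp add: divide_less_eq mult.commute)
    also have "\<dots> \<le> 13 * \<eta>^4 * R" using etap R by simp
    finally show ?thesis by simp
  next
    case False
    have "layer C B (Suc 1) \<subseteq> layer C B 4" by (rule layer_mono[OF BC]) simp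
    then have n2: "0 \<notin> layer C B (Suc 1)" using False by blast
    obtain D2 where D2: "D2 \<in> C" "bset D2 \<inter> closed_segment p 0 \<noteq> {}" "bset D2 \<inter> layer C B 1 \<noteq> {}"
      and D2m: "\<forall>m. 1 = Suc m \<longrightarrow> bset D2 \<inter> layer C B m = {}"
      using separation[OF cov BC p(1) n2] by blast
    have D2_4: "bset D2 \<inter> layer C B 0 = {}" using D2m[rule_format, of 0] by simp
    have n4: "0 \<notin> layer C B (Suc 3)" using False by (simp add: numeral_eq_Suc)
    obtain D4 where D4: "D4 \<in> C" "bset D4 \<inter> closed_segment p 0 \<noteq> {}" "bset D4 \<inter> layer C B 3 \<noteq> {}"
      and D4m: "\<forall>m. 3 = Suc m \<longrightarrow> bset D4 \<inter> layer C B m = {}"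
      using separation[OF cov BC p(1) n4] by blast
    have D4_4: "bset D4 \<inter> layer C B 2 = {}" using D4m[rule_format, of 2] by simp
    have seg: "closed_segment p 0 \<subseteq> ball 0 R"
      using p(2) R by (intro closed_segment_subset) auto
    have L02: "layer C B 0 \<subseteq> layer C B 2" by (rule layer_mono[OF BC]) simp
    have D2L: "bset D2 \<subseteq> layer C B 2" using layer_Suc_subset[OF D2(1) D2(3)] by (simp add: numeral_eq_Suc)
    have d12: "bset B \<inter> bset D2 = {}" using D2_4 by auto
    have d13: "bset B \<inter> bset D4 = {}" using D4_4 L02 by auto
    have d23: "bset D2 \<inter> bset D4 = {}" using D4_4 D2L by auto
    define \<rho> where "\<rho> = snd B / \<eta>^4"
    have \<rho>0: "\<rho> > 0" using rB0 etap by (simp add: \<rho>_def)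
    have r1: "\<rho> \<le> snd B" unfolding \<rho>_def using rB0 eta
      by (simp add: divide_le_eq)
    have "snd D2 \<ge> snd B / \<eta> ^ Suc 1" by (rule meet_rad[OF cov BC D2(1) D2(3)])
    moreover have "snd B / \<eta> ^ 4 \<le> snd B / \<eta> ^ Suc 1"
    proof (rule divide_left_mono)
      show "\<eta> ^ Suc 1 \<le> \<eta> ^ 4" by (rule power_increasing) (use eta in simp_all)
      show "0 \<le> snd B" using rB0 by simp
      show "0 < \<eta> ^ 4 * \<eta> ^ Suc 1" using eta by simp
    qed
    ultimately have r2: "\<rho> \<le> snd D2" unfolding \<rho>_def by linarith
    have "snd D4 \<ge> snd B / \<eta> ^ Suc 3" by (rule meet_rad[OF cov BC D4(1) D4(3)])
    then have r3: "\<rho> \<le> snd D4" unfolding \<rho>_def by (simp add: numeral_eq_Suc)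
    have m1: "cball (fst B) (snd B) \<inter> ball 0 R \<noteq> {}" using p by (auto simp: bset_def)
    have m2: "cball (fst D2) (snd D2) \<inter> ball 0 R \<noteq> {}" using D2(2) seg by (auto simp: bset_def)
    have m3: "cball (fst D4) (snd D4) \<inter> ball 0 R \<noteq> {}" using D4(2) seg by (auto simp: bset_def)
    have "\<rho> < 13 * R"
      by (rule three_balls[OF _ _ _ r1 r2 r3 \<rho>0 R m1 m2 m3])
         (use d12 d13 d23 in \<open>simp_all add: bset_def\<close>)
    then have "snd B < 13 * R * \<eta>^4" unfolding \<rho>_def using etap by (simp add: divide_less_eq)
    then show ?thesis by (simp add: mult.commute mult.left_commute)
  qed
  have "norm (fst B) \<le> dist (fst B) p + norm p"
    using norm_triangle_sub[of "fst B" p] by (simp add: dist_norm add.commute)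
  also have "\<dots> \<le> snd B + R" using p by (intro add_mono) (auto simp: bset_def)
  also have "\<dots> \<le> (13 * \<eta>^4 + 1) * R" using rB by (simp add: algebra_simps)
  finally show "norm (fst B) \<le> (13 * \<eta>^4 + 1) * R" .
  show "snd B \<le> (13 * \<eta>^4 + 1) * R" using rB R by (simp add: algebra_simps)
qed

end
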